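(* Let $n \ge 3$ and let $x_1, \dots, x_n \in \mathbb{R}$ be pairwise distinct. Then the maximum likelihood estimate $\hat\theta \in \mathbb{H}$ of the sample from the Cauchy distribution satisfies $$\sum_{j=1}^n \frac{x_j - \hat\theta}{x_j - \overline{\hat\theta}} = 0.$$
   Context: $\mathbb{H} = \{\theta\in\mathbb{C}:\Im\theta>0\}$. The Cauchy distribution with parameter $\theta = \mu + i\sigma\in\mathbb{H}$ has density $f(x;\theta) = \frac{\sigma}{\pi}\frac{1}{(x-\mu)^2+\sigma^2}$; the maximum likelihood estimate is the (unique) maximizer over $\mathbb{H}$ of $\prod_{j=1}^n f(x_j;\theta)$. *)

theory Defs
  imports "HOL-Analysis.Analysis"
begin

definition cauchy_density :: "real \<Rightarrow> complex \<Rightarrow> real" where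
  "cauchy_density x \<theta> = (Im \<theta> / pi) * (1 / ((x - Re \<theta>)^2 + (Im \<theta>)^2))"

definition cauchy_likelihood :: "nat \<Rightarrow> (nat \<Rightarrow> real) \<Rightarrow> complex \<Rightarrow> real" where
  "cauchy_likelihood n x \<theta> = (\<Prod>j=1..n. cauchy_density (x j) \<theta>)"

definition is_cauchy_MLE :: "nat \<Rightarrow> (nat \<Rightarrow> real) \<Rightarrow> complex \<Rightarrow> bool" where
  "is_cauchy_MLE n x \<theta> \<longleftrightarrow> Im \<theta> > 0 \<and>
     (\<forall>\<theta>'. Im \<theta>' > 0 \<longrightarrow> cauchy_likelihood n x \<theta>' \<le> cauchy_likelihood n x \<theta>)"

end

theory Submission
  imports Defs
begin

lemma ln_lik:
  assumes "Im t > 0"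
  shows "ln (cauchy_likelihood n x t) =
    (\<Sum>j=1..n. ln (Im t) - ln pi - ln ((x j - Re t)^2 + (Im t)^2))"
proof -
  have pos: "(x j - Re t)^2 + (Im t)^2 > 0" for j
    using assms by (simp add: add_nonneg_pos)
  have dpos: "cauchy_density (x j) t > 0" for j
    using assms pos[of j] by (simp add: cauchy_density_def)
  have "ln (cauchy_likelihood n x t) = (\<Sum>j=1..n. ln (cauchy_density (x j) t))"
    unfolding cauchy_likelihood_def by (intro ln_prod) (simp_all add: dpos[THEN less_imp_neq, symmetric])
  also have "\<dots> = (\<Sum>j=1..n. ln (Im t) - ln pi - ln ((x j - Re t)^2 + (Im t)^2))"
  proof (rule sum.cong[OF refl])
    fix j
    show "ln (cauchy_density (x j) t) = ln (Im t) - ln pi - ln ((x j - Re t)^2 + (Im t)^2)"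
      unfolding cauchy_density_def using assms pos[of j]
      by (simp add: ln_mult ln_div)
  qed
  finally show ?thesis .
qed

lemma lik_pos:
  assumes "Im t > 0"
  shows "cauchy_likelihood n x t > 0"
proof -
  have pos: "(x j - Re t)^2 + (Im t)^2 > 0" for j
    using assms by (simp add: add_nonneg_pos)
  have dpos: "cauchy_density (x j) t > 0" for j
    using assms pos[of j] by (simp add: cauchy_density_def)
  show ?thesis unfolding cauchy_likelihood_def using dpos by (intro prod_pos) auto
qed

theorem mainTheorem7:
  fixes n :: nat and x :: "nat \<Rightarrow> real" and \<theta> :: complex
  assumes "n \<ge> 3"
    and "\<And>i j. i \<in> {1..n} \<Longrightarrow> j \<in> {1..n} \<Longrightarrow> i \<noteq> j \<Longrightarrow> x i \<noteq> x j"
    and "is_cauchy_MLE n x \<theta>"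
  shows "(\<Sum>j=1..n. (complex_of_real (x j) - \<theta>) / (complex_of_real (x j) - cnj \<theta>)) = 0"
proof -
  define \<mu> where "\<mu> = Re \<theta>"
  define \<sigma> where "\<sigma> = Im \<theta>"
  have sp: "\<sigma> > 0" using assms(3) by (simp add: is_cauchy_MLE_def \<sigma>_def)
  define F where "F a b = (\<Sum>j=1..n. ln b - ln pi - ln ((x j - a)^2 + b^2))" for a b
  have Fle: "F a b \<le> F \<mu> \<sigma>" if "b > 0" for a b
  proof -
    let ?t = "Complex a b"
    have "cauchy_likelihood n x ?t \<le> cauchy_likelihood n x \<theta>"
      using assms(3) that by (simp add: is_cauchy_MLE_def)
    hence "ln (cauchy_likelihood n x ?t) \<le> ln (cauchy_likelihood n x \<theta>)"
      using lik_pos[of ?t n x] that by simp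
    thus ?thesis using ln_lik[of ?t n x] ln_lik[of \<theta> n x] that sp
      by (simp add: F_def \<mu>_def \<sigma>_def)
  qed
  define d where "d j = (x j - \<mu>)^2 + \<sigma>^2" for j
  have dp: "d j > 0" for j using sp by (simp add: d_def add_nonneg_pos)
  have D1: "((\<lambda>a. F a \<sigma>) has_real_derivative (\<Sum>j=1..n. 2 * (x j - \<mu>) / d j)) (at \<mu>)"
  proof -
    have "((\<lambda>a. F a \<sigma>) has_real_derivative
       (\<Sum>j=1..n. 0 - 0 - (-(2 * (x j - \<mu>) / d j)))) (at \<mu>)"
      unfolding F_def
    proof (intro DERIV_sum DERIV_diff DERIV_const)
      fix j
      have g: "((\<lambda>a. (x j - a)^2 + \<sigma>^2) has_real_derivative (-2*(x j - \<mu>))) (at \<mu>)"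
        by (auto intro!: derivative_eq_intros)
      have pj: "0 < (x j - \<mu>)^2 + \<sigma>^2" using dp[of j] d_def by simp
      have "((\<lambda>a. ln ((x j - a)^2 + \<sigma>^2)) has_real_derivative
         (1 / ((x j - \<mu>)^2 + \<sigma>^2) * (-2*(x j - \<mu>)))) (at \<mu>)"
        by (rule DERIV_chain2[OF DERIV_ln_divide[OF pj] g])
      moreover have "1 / ((x j - \<mu>)^2 + \<sigma>^2) * (-2*(x j - \<mu>)) = -(2 * (x j - \<mu>) / d j)"
        unfolding d_def minus_divide_left by simp
      ultimately show "((\<lambda>a. ln ((x j - a)^2 + \<sigma>^2)) has_real_derivative (-(2 * (x j - \<mu>) / d j))) (at \<mu>)"
        by (simp only:)
    qed
    thus ?thesis by simp
  qed
  have D2: "((\<lambda>b. F \<mu> b) has_real_derivative (\<Sum>j=1..n. 1/\<sigma> - 2*\<sigma>/d j)) (at \<sigma>)"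
  proof -
    have "((\<lambda>b. F \<mu> b) has_real_derivative
       (\<Sum>j=1..n. 1/\<sigma> - 0 - 2*\<sigma>/d j)) (at \<sigma>)"
      unfolding F_def
    proof (intro DERIV_sum DERIV_diff DERIV_const)
      fix j
      show "(ln has_real_derivative 1/\<sigma>) (at \<sigma>)" using DERIV_ln_divide[OF sp] .
      have g: "((\<lambda>b. (x j - \<mu>)^2 + b^2) has_real_derivative (2*\<sigma>)) (at \<sigma>)"
        by (auto intro!: derivative_eq_intros)
      have pj: "0 < (x j - \<mu>)^2 + \<sigma>^2" using dp[of j] d_def by simp
      have "((\<lambda>b. ln ((x j - \<mu>)^2 + b^2)) has_real_derivative
         (1 / ((x j - \<mu>)^2 + \<sigma>^2) * (2*\<sigma>))) (at \<sigma>)"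
        by (rule DERIV_chain2[OF DERIV_ln_divide[OF pj] g])
      moreover have "1 / ((x j - \<mu>)^2 + \<sigma>^2) * (2*\<sigma>) = 2*\<sigma>/d j"
        using pj by (simp add: d_def field_simps)
      ultimately show "((\<lambda>b. ln ((x j - \<mu>)^2 + b^2)) has_real_derivative (2*\<sigma>/d j)) (at \<sigma>)"
        by (simp only:)
    qed
    thus ?thesis by simp
  qed
  have Z1: "(\<Sum>j=1..n. 2 * (x j - \<mu>) / d j) = 0"
    by (rule DERIV_local_max[OF D1, of 1]) (use Fle sp in auto)
  have Z2: "(\<Sum>j=1..n. 1/\<sigma> - 2*\<sigma>/d j) = 0"
    by (rule DERIV_local_max[OF D2, of \<sigma>]) (use Fle sp in auto)
  have th: "\<theta> = Complex \<mu> \<sigma>" by (simp add: \<mu>_def \<sigma>_def complex_eq_iff)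
  have trm: "(complex_of_real (x j) - \<theta>) / (complex_of_real (x j) - cnj \<theta>)
      = Complex (((x j - \<mu>)^2 - \<sigma>^2) / d j) (-(\<sigma> * (2 * (x j - \<mu>) / d j)))" for j
  proof -
    have a: "complex_of_real (x j) - \<theta> = Complex (x j - \<mu>) (-\<sigma>)" by (simp add: th complex_eq_iff)
    have b: "complex_of_real (x j) - cnj \<theta> = Complex (x j - \<mu>) \<sigma>" by (simp add: th complex_eq_iff)
    show ?thesis unfolding a b using dp[of j]
      by (simp add: complex_eq_iff Re_divide Im_divide d_def power2_eq_square field_simps)
  qed
  have re: "(\<Sum>j=1..n. ((x j - \<mu>)^2 - \<sigma>^2) / d j) = \<sigma> * (\<Sum>j=1..n. 1/\<sigma> - 2*\<sigma>/d j)"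
    unfolding sum_distrib_left
  proof (rule sum.cong[OF refl])
    fix j show "((x j - \<mu>)^2 - \<sigma>^2) / d j = \<sigma> * (1/\<sigma> - 2*\<sigma>/d j)"
    proof -
      have e: "(x j - \<mu>)^2 = d j - \<sigma>^2" by (simp add: d_def)
      show ?thesis unfolding e using dp[of j] sp by (simp add: field_simps power2_eq_square)
    qed
  qed
  have im: "(\<Sum>j=1..n. -(\<sigma> * (2 * (x j - \<mu>) / d j))) = -(\<sigma> * (\<Sum>j=1..n. 2 * (x j - \<mu>) / d j))"
    by (simp add: sum_distrib_left sum_negf)
  show ?thesis unfolding trm
  proof (rule complex_eqI)
    show "Re (\<Sum>j=1..n. Complex (((x j - \<mu>)^2 - \<sigma>^2) / d j) (-(\<sigma> * (2 * (x j - \<mu>) / d j)))) = Re 0"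
      unfolding Re_sum complex.sel re Z2 by simp
    show "Im (\<Sum>j=1..n. Complex (((x j - \<mu>)^2 - \<sigma>^2) / d j) (-(\<sigma> * (2 * (x j - \<mu>) / d j)))) = Im 0"
      unfolding Im_sum complex.sel im Z1 by simp
  qed
qed

end
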